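(* Let $(\mathfrak J,B,\omega)$ be a symplectic pseudo-euclidean Jordan algebra over an algebraically closed field $\mathbb K$ (of characteristic zero). Then there exist two subalgebras $\mathcal U$ and $\mathcal V$ of $\mathfrak J$ such that $(\mathfrak J=\mathcal U\oplus\mathcal V,B,\omega)$ is a symplectic Jordan-Manin algebra.
   Context: All algebras are finite-dimensional. A Jordan algebra is a commutative algebra with $x(yx^2)=(xy)x^2$; $(\mathfrak J,B)$ is pseudo-euclidean if $B$ is nondegenerate symmetric with $B(xy,z)=B(x,yz)$. A symplectic form is a nondegenerate skew-symmetric bilinear $\omega$ with $\omega(xy,z)+\omega(yz,x)+\omega(zx,y)=0$. A Jordan-Manin algebra is a pseudo-euclidean Jordan algebra $(\mathfrak J,B)$ with $\mathfrak J=\mathcal U\oplus\mathcal V$ (vector space direct sum) for two subalgebras $\mathcal U,\mathcal V$ that are totally isotropic for $B$. It is a symplectic Jordan-Manin algebra if moreover it carries a symplectic form $\omega$ with $\omega(\mathcal U,\mathcal U)=\omega(\mathcal V,\mathcal V)=\{0\}$. *)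

theory Defs
  imports Main "HOL-Computational_Algebra.Polynomial"
begin

definition alg_closed :: "'k::field itself \<Rightarrow> bool" where
  "alg_closed _ \<longleftrightarrow> (\<forall>p::'k poly. degree p > 0 \<longrightarrow> (\<exists>x. poly p x = 0))"

definition bilinear_prod :: "('k::field \<Rightarrow> 'v::ab_group_add \<Rightarrow> 'v) \<Rightarrow> ('v \<Rightarrow> 'v \<Rightarrow> 'v) \<Rightarrow> bool" where
  "bilinear_prod scale m \<longleftrightarrow>
     (\<forall>x. Vector_Spaces.linear scale scale (m x)) \<and> (\<forall>y. Vector_Spaces.linear scale scale (\<lambda>x. m x y))"

definition bilinear_form :: "('k::field \<Rightarrow> 'v::ab_group_add \<Rightarrow> 'v) \<Rightarrow> ('v \<Rightarrow> 'v \<Rightarrow> 'k) \<Rightarrow> bool" where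
  "bilinear_form scale f \<longleftrightarrow>
     (\<forall>x. Vector_Spaces.linear scale (*) (f x)) \<and> (\<forall>y. Vector_Spaces.linear scale (*) (\<lambda>x. f x y))"

definition nondegenerate :: "('v::ab_group_add \<Rightarrow> 'v \<Rightarrow> 'k::field) \<Rightarrow> bool" where
  "nondegenerate f \<longleftrightarrow> (\<forall>x. (\<forall>y. f x y = 0) \<longrightarrow> x = 0)"

definition jordan_algebra :: "('k::field \<Rightarrow> 'v::ab_group_add \<Rightarrow> 'v) \<Rightarrow> ('v \<Rightarrow> 'v \<Rightarrow> 'v) \<Rightarrow> bool" where
  "jordan_algebra scale m \<longleftrightarrow> bilinear_prod scale m \<and> (\<forall>x y. m x y = m y x) \<and>
     (\<forall>x y. m x (m y (m x x)) = m (m x y) (m x x))"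

definition pseudo_euclidean ::
  "('k::field \<Rightarrow> 'v::ab_group_add \<Rightarrow> 'v) \<Rightarrow> ('v \<Rightarrow> 'v \<Rightarrow> 'v) \<Rightarrow> ('v \<Rightarrow> 'v \<Rightarrow> 'k) \<Rightarrow> bool" where
  "pseudo_euclidean scale m B \<longleftrightarrow> bilinear_form scale B \<and> (\<forall>x y. B x y = B y x) \<and>
     nondegenerate B \<and> (\<forall>x y z. B (m x y) z = B x (m y z))"

definition symplectic_form ::
  "('k::field \<Rightarrow> 'v::ab_group_add \<Rightarrow> 'v) \<Rightarrow> ('v \<Rightarrow> 'v \<Rightarrow> 'v) \<Rightarrow> ('v \<Rightarrow> 'v \<Rightarrow> 'k) \<Rightarrow> bool" where
  "symplectic_form scale m \<omega> \<longleftrightarrow> bilinear_form scale \<omega> \<and> (\<forall>x y. \<omega> x y = - \<omega> y x) \<and>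
     nondegenerate \<omega> \<and> (\<forall>x y z. \<omega> (m x y) z + \<omega> (m y z) x + \<omega> (m z x) y = 0)"

definition subalgebra :: "('k::field \<Rightarrow> 'v::ab_group_add \<Rightarrow> 'v) \<Rightarrow> ('v \<Rightarrow> 'v \<Rightarrow> 'v) \<Rightarrow> 'v set \<Rightarrow> bool" where
  "subalgebra scale m U \<longleftrightarrow> module.subspace scale U \<and> (\<forall>x\<in>U. \<forall>y\<in>U. m x y \<in> U)"

definition totally_isotropic :: "('v \<Rightarrow> 'v \<Rightarrow> 'k::zero) \<Rightarrow> 'v set \<Rightarrow> bool" where
  "totally_isotropic f U \<longleftrightarrow> (\<forall>x\<in>U. \<forall>y\<in>U. f x y = 0)"

definition direct_sum :: "'v::ab_group_add set \<Rightarrow> 'v set \<Rightarrow> bool" where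
  "direct_sum U V \<longleftrightarrow> U \<inter> V = {0} \<and> (\<forall>x. \<exists>u\<in>U. \<exists>v\<in>V. x = u + v)"

definition jordan_manin ::
  "('k::field \<Rightarrow> 'v::ab_group_add \<Rightarrow> 'v) \<Rightarrow> ('v \<Rightarrow> 'v \<Rightarrow> 'v) \<Rightarrow> ('v \<Rightarrow> 'v \<Rightarrow> 'k) \<Rightarrow> 'v set \<Rightarrow> 'v set \<Rightarrow> bool" where
  "jordan_manin scale m B U V \<longleftrightarrow> jordan_algebra scale m \<and> pseudo_euclidean scale m B \<and>
     subalgebra scale m U \<and> subalgebra scale m V \<and> direct_sum U V \<and>
     totally_isotropic B U \<and> totally_isotropic B V"

definition symplectic_jordan_manin ::
  "('k::field \<Rightarrow> 'v::ab_group_add \<Rightarrow> 'v) \<Rightarrow> ('v \<Rightarrow> 'v \<Rightarrow> 'v) \<Rightarrow> ('v \<Rightarrow> 'v \<Rightarrow> 'k) \<Rightarrow> ('v \<Rightarrow> 'v \<Rightarrow> 'k)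
     \<Rightarrow> 'v set \<Rightarrow> 'v set \<Rightarrow> bool" where
  "symplectic_jordan_manin scale m B \<omega> U V \<longleftrightarrow> jordan_manin scale m B U V \<and>
     symplectic_form scale m \<omega> \<and> totally_isotropic \<omega> U \<and> totally_isotropic \<omega> V"

end

theory Submission
  imports Defs
begin


lemma one_minus_pow:
  fixes B :: "'a::comm_ring_1"
  shows "\<exists>c. (1 - B)^n = 1 - B * c"
proof (induction n)
  case 0 show ?case by (intro exI[of _ 0]) simp
next
  case (Suc n)
  then obtain c where h: "(1 - B)^n = 1 - B * c" by blast
  have "(1 - B)^Suc n = (1 - B) * (1 - B * c)" by (simp only: power_Suc h)
  also have "\<dots> = 1 - B * (1 + c - B * c)" by (simp add: algebra_simps)
  finally have "(1 - B)^Suc n = 1 - B * (1 + c - B * c)" .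
  then show ?case by blast
qed

lemma bez:
  fixes f :: "'k::field poly"
  assumes "poly f u \<noteq> 0"
  shows "\<exists>a b. a * [:-u,1:]^n + b * f = 1"
proof -
  define c where "c = poly f u"
  have "poly (f - [:c:]) u = 0" by (simp add: c_def)
  then obtain g where g: "f - [:c:] = [:-u,1:] * g" using poly_eq_0_iff_dvd by (metis dvdE)
  define Bp where "Bp = smult (1/c) f"
  have h1: "1 - Bp = (- smult (1/c) g) * [:-u,1:]"
  proof -
    have "f = [:c:] + [:-u,1:] * g" using g by (simp add: algebra_simps)
    then have "Bp = smult (1/c) [:c:] + smult (1/c) ([:-u,1:] * g)" by (simp add: Bp_def smult_add_right)
    also have "smult (1/c) [:c:] = 1" using assms by (simp add: c_def one_pCons)
    finally have "1 - Bp = - smult (1/c) ([:-u,1:] * g)" by simp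
    moreover have "(- smult (1/c) g) * [:-u,1:] = - smult (1/c) (g * [:-u,1:])"
      by (simp only: mult_minus_left mult_smult_left)
    moreover have "g * [:-u,1:] = [:-u,1:] * g" by (rule mult.commute)
    ultimately show ?thesis by simp
  qed
  have e: "(1 - Bp)^n = (- smult (1/c) g)^n * [:-u,1:]^n" unfolding h1 by (rule power_mult_distrib)
  obtain c' where "(1 - Bp)^n = 1 - Bp * c'" using one_minus_pow by blast
  with e have "1 = (- smult (1/c) g)^n * [:-u,1:]^n + (smult (1/c) c') * f"
    by (simp add: Bp_def algebra_simps)
  then show ?thesis by metis
qed

lemma split_poly:
  fixes p :: "'k::field poly"
  assumes alg: "alg_closed TYPE('k)" and "p \<noteq> 0"
  shows "\<exists>S K. finite S \<and> p dvd (\<Prod>l\<in>S. [:-l,1:]^K)"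
  using assms(2)
proof (induction "degree p" arbitrary: p)
  case 0
  then have "is_unit p" using is_unit_iff_degree[OF 0(2)] 0(1) by simp
  then show ?case by (intro exI[of _ "{}"]) auto
next
  case (Suc n)
  have "degree p > 0" using Suc.hyps(2) by simp
  then obtain c where "poly p c = 0" using alg unfolding alg_closed_def by blast
  then obtain q where pq: "p = [:-c,1:] * q" using poly_eq_0_iff_dvd by (metis dvdE)
  have q0: "q \<noteq> 0" using Suc.prems pq by auto
  have "degree ([:-c,1:] * q) = degree [:-c,1:] + degree q" by (rule degree_mult_eq) (use q0 in auto)
  then have "degree p = 1 + degree q" using pq by simp
  then have "n = degree q" using Suc.hyps by simp
  from Suc.hyps(1)[OF this q0] obtain S K where SK: "finite S" "q dvd (\<Prod>l\<in>S. [:-l,1:]^K)" by blast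
  define S' where "S' = insert c S"
  define K' where "K' = Suc K"
  have fS': "finite S'" using SK by (simp add: S'_def)
  have d1: "[:-c,1:] dvd (\<Prod>l\<in>S'. [:-l,1:]^K')"
  proof -
    have "[:-c,1:] dvd [:-c,1:]^K'" unfolding K'_def power_Suc by (rule dvd_triv_left)
    also have "\<dots> dvd (\<Prod>l\<in>S'. [:-l,1:]^K')"
      using fS' by (intro dvd_prodI) (auto simp: S'_def)
    finally show ?thesis .
  qed
  have d2: "q dvd (\<Prod>l\<in>S'. [:-l,1:]^K')"
  proof -
    have "(\<Prod>l\<in>S. [:-l,1:]^K) dvd (\<Prod>l\<in>S. [:-l,1:]^K')"
      by (intro prod_dvd_prod le_imp_power_dvd) (simp add: K'_def)
    also have "\<dots> dvd (\<Prod>l\<in>S'. [:-l,1:]^K')"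
      using fS' by (intro prod_dvd_prod_subset) (auto simp: S'_def)
    finally show ?thesis by (rule dvd_trans[OF SK(2)])
  qed
  have "p dvd (\<Prod>l\<in>S'. [:-l,1:]^K') * (\<Prod>l\<in>S'. [:-l,1:]^K')"
    unfolding pq by (rule mult_dvd_mono[OF d1 d2])
  also have "\<dots> = (\<Prod>l\<in>S'. [:-l,1:]^(K'+K'))"
    by (simp only: prod.distrib[symmetric] power_add)
  finally show ?case using fS' by blast
qed

definition cone :: "'k::field_char_0 set \<Rightarrow> bool" where
  "cone P \<longleftrightarrow> (\<forall>a\<in>P. \<forall>b\<in>P. a + b \<in> P) \<and> 0 \<notin> P \<and>
     (\<forall>n x. n > 0 \<longrightarrow> of_nat n * x \<in> P \<longrightarrow> x \<in> P)"

lemma cone_mult: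
  assumes "\<forall>a\<in>P. \<forall>b\<in>P. a + b \<in> P" "p \<in> P" "k > 0"
  shows "of_nat k * p \<in> P"
  using assms(3)
proof (induction k)
  case 0 then show ?case by simp
next
  case (Suc k)
  show ?case
  proof (cases "k = 0")
    case True then show ?thesis using assms by simp
  next
    case False
    then have "of_nat k * p \<in> P" using Suc by simp
    then have "of_nat k * p + p \<in> P" using assms by blast
    then show ?thesis by (simp add: algebra_simps)
  qed
qed

lemma cone_extend:
  fixes s :: "'k::field_char_0"
  assumes P: "cone P" and s0: "s \<noteq> 0" and ns: "- s \<notin> P"
  shows "\<exists>P'. cone P' \<and> P \<subseteq> P' \<and> s \<in> P'"
proof -
  have addP: "\<forall>a\<in>P. \<forall>b\<in>P. a + b \<in> P" and zP: "0 \<notin> P"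
    and pure: "\<And>n x. n > 0 \<Longrightarrow> of_nat n * x \<in> P \<Longrightarrow> x \<in> P"
    using P unfolding cone_def by auto
  define Q where "Q = {p + of_nat n * s | p n. (p \<in> P \<or> p = 0) \<and> (p \<in> P \<or> n > 0)}"
  have Qadd: "a + b \<in> Q" if ha: "a \<in> Q" and hb: "b \<in> Q" for a b
  proof -
    obtain p1 n1 where 1: "a = p1 + of_nat n1 * s" "p1 \<in> P \<or> p1 = 0" "p1 \<in> P \<or> n1 > 0"
      using ha unfolding Q_def by blast
    obtain p2 n2 where 2: "b = p2 + of_nat n2 * s" "p2 \<in> P \<or> p2 = 0" "p2 \<in> P \<or> n2 > 0"
      using hb unfolding Q_def by blast
    have e: "a + b = (p1 + p2) + of_nat (n1 + n2) * s" using 1 2 by (simp add: algebra_simps)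
    have "(p1 + p2 \<in> P \<or> p1 + p2 = 0) \<and> (p1 + p2 \<in> P \<or> n1 + n2 > 0)"
      using 1 2 addP by auto
    then show ?thesis unfolding Q_def using e by blast
  qed
  have Qmult: "of_nat k * a \<in> Q" if ha: "a \<in> Q" and hk: "k > 0" for a k
  proof -
    obtain p n where 1: "a = p + of_nat n * s" "p \<in> P \<or> p = 0" "p \<in> P \<or> n > 0"
      using ha unfolding Q_def by blast
    have e: "of_nat k * a = of_nat k * p + of_nat (k * n) * s" using 1 by (simp add: algebra_simps)
    have "(of_nat k * p \<in> P \<or> of_nat k * p = 0) \<and> (of_nat k * p \<in> P \<or> k * n > 0)"
      using 1 cone_mult[OF addP _ hk] hk by auto
    then show ?thesis unfolding Q_def using e by blast
  qed
  have Q0: "0 \<notin> Q"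
  proof
    assume "0 \<in> Q"
    then obtain p n where 1: "0 = p + of_nat n * s" "p \<in> P \<or> p = 0" "p \<in> P \<or> n > 0"
      unfolding Q_def by blast
    show False
    proof (cases "n = 0")
      case True then show False using 1 zP by auto
    next
      case False
      show False
      proof (cases "p = 0")
        case True
        then have "of_nat n * s = 0" using 1 by simp
        then show False using False s0 by simp
      next
        case pn: False
        then have "p \<in> P" using 1 by auto
        moreover have "p = - (of_nat n * s)" using 1(1)[symmetric] add_eq_0_iff2 by blast
        moreover have "of_nat n * (- s) = - (of_nat n * s)" by simp
        ultimately have "of_nat n * (-s) \<in> P" by simp
        then have "-s \<in> P" using pure False by blast
        then show False using ns by simp
      qed
    qed
  qed
  define P' where "P' = {x. \<exists>k>0. of_nat k * x \<in> Q}"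
  have "cone P'"
    unfolding cone_def
  proof (intro conjI ballI allI impI)
    fix a b assume "a \<in> P'" "b \<in> P'"
    then obtain k l where kl: "k > 0" "of_nat k * a \<in> Q" "l > 0" "of_nat l * b \<in> Q"
      unfolding P'_def by blast
    have "of_nat l * (of_nat k * a) + of_nat k * (of_nat l * b) \<in> Q"
      by (rule Qadd[OF Qmult[OF kl(2) kl(3)] Qmult[OF kl(4) kl(1)]])
    moreover have "of_nat l * (of_nat k * a) + of_nat k * (of_nat l * b) = of_nat (k * l) * (a + b)"
      by (simp add: algebra_simps)
    ultimately have "of_nat (k * l) * (a + b) \<in> Q" by simp
    moreover have "k * l > 0" using kl by simp
    ultimately show "a + b \<in> P'" unfolding P'_def by blast
  next
    show "0 \<notin> P'" unfolding P'_def using Q0 by simp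
  next
    fix n x assume n: "(n::nat) > 0" "of_nat n * x \<in> P'"
    then obtain k where "k > 0" "of_nat k * (of_nat n * x) \<in> Q" unfolding P'_def by blast
    then have "of_nat (k * n) * x \<in> Q" "k * n > 0" using n by (simp_all add: algebra_simps)
    then show "x \<in> P'" unfolding P'_def by blast
  qed
  moreover have "P \<subseteq> P'"
  proof
    fix x assume "x \<in> P"
    then have "x + of_nat 0 * s \<in> Q" unfolding Q_def by (intro CollectI exI[of _ x] exI[of _ 0]) simp
    then show "x \<in> P'" unfolding P'_def by (intro CollectI exI[of _ 1]) simp
  qed
  moreover have "s \<in> P'"
  proof -
    have "0 + of_nat 1 * s \<in> Q" unfolding Q_def by (intro CollectI exI[of _ 0] exI[of _ 1]) simp
    then show ?thesis unfolding P'_def by (intro CollectI exI[of _ 1]) simp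
  qed
  ultimately show ?thesis by blast
qed

lemma cone_exists:
  fixes S :: "'k::field_char_0 set"
  assumes "finite S" "0 \<notin> S"
  shows "\<exists>P. cone P \<and> (\<forall>s\<in>S. s \<in> P \<or> - s \<in> P)"
  using assms
proof (induction S rule: finite_induct)
  case empty
  have "cone {}" unfolding cone_def by simp
  then show ?case by blast
next
  case (insert s S)
  then obtain P where P: "cone P" "\<forall>t\<in>S. t \<in> P \<or> - t \<in> P" by auto
  show ?case
  proof (cases "s \<in> P \<or> - s \<in> P")
    case True then show ?thesis using P by auto
  next
    case False
    then obtain P' where "cone P'" "P \<subseteq> P'" "s \<in> P'"
      using cone_extend[OF P(1), of s] insert.prems by auto
    then show ?thesis using P(2) by blast
  qed
qed




lemma lin_mh: "Vector_Spaces.linear s1 s2 f \<Longrightarrow> module_hom s1 s2 f"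
  by (simp add: module_hom_iff_linear)

locale sjm = finite_dimensional_vector_space scale Basis
  for scale :: "'k::field_char_0 \<Rightarrow> 'v::ab_group_add \<Rightarrow> 'v" (infixr \<open>*s\<close> 75)
  and Basis :: "'v set" +
  fixes m :: "'v \<Rightarrow> 'v \<Rightarrow> 'v" and B \<omega> :: "'v \<Rightarrow> 'v \<Rightarrow> 'k"
  assumes JA: "jordan_algebra scale m" and PE: "pseudo_euclidean scale m B"
    and SF: "symplectic_form scale m \<omega>"
begin

lemma bp_m: "bilinear_prod scale m" using JA unfolding jordan_algebra_def by blast
lemma bf_B: "bilinear_form scale B" using PE unfolding pseudo_euclidean_def by blast
lemma bf_w: "bilinear_form scale \<omega>" using SF unfolding symplectic_form_def by blast
lemma mh_m1: "module_hom scale scale (\<lambda>x. m x y)"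
  using bp_m unfolding bilinear_prod_def by (blast intro: lin_mh)
lemma mh_m2: "module_hom scale scale (m x)"
  using bp_m unfolding bilinear_prod_def by (blast intro: lin_mh)
lemma m_comm: "m x y = m y x"
  using JA unfolding jordan_algebra_def by blast
lemma mh_B1: "module_hom scale (*) (\<lambda>x. B x y)"
  using bf_B unfolding bilinear_form_def by (blast intro: lin_mh)
lemma mh_B2: "module_hom scale (*) (B x)"
  using bf_B unfolding bilinear_form_def by (blast intro: lin_mh)
lemma mh_w1: "module_hom scale (*) (\<lambda>x. \<omega> x y)"
  using bf_w unfolding bilinear_form_def by (blast intro: lin_mh)
lemma mh_w2: "module_hom scale (*) (\<omega> x)"
  using bf_w unfolding bilinear_form_def by (blast intro: lin_mh)
lemma B_sym: "B x y = B y x"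
  using PE unfolding pseudo_euclidean_def by blast
lemma B_inv: "B (m x y) z = B x (m y z)"
  using PE unfolding pseudo_euclidean_def by blast
lemma B_nd: "(\<And>y. B x y = 0) \<Longrightarrow> x = 0"
  using PE unfolding pseudo_euclidean_def nondegenerate_def by blast
lemma w_skew: "\<omega> x y = - \<omega> y x"
  using SF unfolding symplectic_form_def by blast
lemma w_nd: "(\<And>y. \<omega> x y = 0) \<Longrightarrow> x = 0"
  using SF unfolding symplectic_form_def nondegenerate_def by blast
lemma w_cyc: "\<omega> (m x y) z + \<omega> (m y z) x + \<omega> (m z x) y = 0"
  using SF unfolding symplectic_form_def by blast

lemmas m_add1 = module_hom.add[OF mh_m1] and m_add2 = module_hom.add[OF mh_m2]
  and m_sc1 = module_hom.scale[OF mh_m1] and m_sc2 = module_hom.scale[OF mh_m2]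
  and m_diff1 = module_hom.diff[OF mh_m1] and m_diff2 = module_hom.diff[OF mh_m2]
  and m_zero1 = module_hom.zero[OF mh_m1] and m_zero2 = module_hom.zero[OF mh_m2]
  and B_add1 = module_hom.add[OF mh_B1] and B_add2 = module_hom.add[OF mh_B2]
  and B_sc1 = module_hom.scale[OF mh_B1] and B_sc2 = module_hom.scale[OF mh_B2]
  and B_diff1 = module_hom.diff[OF mh_B1] and B_diff2 = module_hom.diff[OF mh_B2]
  and B_zero1 = module_hom.zero[OF mh_B1] and B_zero2 = module_hom.zero[OF mh_B2]
  and w_add1 = module_hom.add[OF mh_w1] and w_add2 = module_hom.add[OF mh_w2]
  and w_sc1 = module_hom.scale[OF mh_w1] and w_sc2 = module_hom.scale[OF mh_w2]
  and w_zero1 = module_hom.zero[OF mh_w1] and w_zero2 = module_hom.zero[OF mh_w2]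

lemma B_eq: "(\<And>z. B x z = B y z) \<Longrightarrow> x = y"
proof -
  assume h: "\<And>z. B x z = B y z"
  have "x - y = 0" by (rule B_nd) (simp add: B_diff1 h)
  then show ?thesis by simp
qed

lemma form_basis_zero:
  assumes add: "\<And>x y. f (x + y) = f x + f y" and sc: "\<And>c x. f (c *s x) = c * f x"
    and b: "\<And>b. b \<in> Basis \<Longrightarrow> f b = 0"
  shows "f z = (0::'k)"
proof -
  have "z \<in> span Basis" by (simp add: span_Basis)
  then show ?thesis
  proof (induction rule: span_induct_alt)
    case base
    show ?case using sc[of 0 0] by simp
  next
    case (step c x y)
    then show ?case by (simp add: add sc b)
  qed
qed

lemma ie: "(\<Sum>v\<in>Basis. c v *s v) = 0 \<Longrightarrow> v \<in> Basis \<Longrightarrow> c v = 0"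
  using independent_Basis unfolding independent_explicit by blast

definition L :: "'v \<Rightarrow> 'v" where "L x = (\<Sum>b\<in>Basis. B x b *s b)"

lemma L_lin: "Vector_Spaces.linear scale scale L"
  unfolding Vector_Spaces.linear_iff
proof (intro conjI allI)
  show "vector_space scale" by (rule vector_space_axioms)
  show "vector_space scale" by (rule vector_space_axioms)
  fix x y show "L (x + y) = L x + L y"
    by (simp add: L_def B_add1 scale_left_distrib sum.distrib)
next
  fix c x show "L (c *s x) = c *s L x"
    by (simp add: L_def B_sc1 scale_sum_right)
qed

lemma L_inj: "inj L"
proof (rule injI)
  fix x y assume h: "L x = L y"
  have "(\<Sum>b\<in>Basis. (B x b - B y b) *s b) = L x - L y"
    by (simp add: L_def scale_left_diff_distrib sum_subtractf)
  then have "(\<Sum>b\<in>Basis. (B x b - B y b) *s b) = 0" using h by simp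
  then have "\<forall>b\<in>Basis. B x b - B y b = 0"
    using ie[of "\<lambda>b. B x b - B y b"] by blast
  then have h0: "\<And>b. b \<in> Basis \<Longrightarrow> B (x - y) b = 0" by (simp add: B_diff1)
  have "B (x - y) z = 0" for z
    by (rule form_basis_zero[of "B (x - y)"]) (simp_all add: B_add2 B_sc2 h0)
  then have "x - y = 0" by (rule B_nd)
  then show "x = y" by simp
qed

lemma L_surj: "surj L"
  by (rule linear_inj_imp_surj[OF L_lin L_inj])

definition D :: "'v \<Rightarrow> 'v" where
  "D x = (SOME y. L y = (\<Sum>b\<in>Basis. \<omega> x b *s b))"

lemma DB: "B (D x) z = \<omega> x z"
proof -
  obtain y where "L y = (\<Sum>b\<in>Basis. \<omega> x b *s b)" using L_surj by (metis surjD)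
  then have h: "L (D x) = (\<Sum>b\<in>Basis. \<omega> x b *s b)" unfolding D_def by (rule someI)
  have "(\<Sum>b\<in>Basis. (B (D x) b - \<omega> x b) *s b) = L (D x) - (\<Sum>b\<in>Basis. \<omega> x b *s b)"
    by (simp add: L_def scale_left_diff_distrib sum_subtractf)
  then have "(\<Sum>b\<in>Basis. (B (D x) b - \<omega> x b) *s b) = 0" using h by simp
  then have h0: "\<forall>b\<in>Basis. B (D x) b - \<omega> x b = 0"
    using ie[of "\<lambda>b. B (D x) b - \<omega> x b"] by blast
  have "(\<lambda>z. B (D x) z - \<omega> x z) z = 0"
  proof (rule form_basis_zero)
    fix a b show "B (D x) (a + b) - \<omega> x (a + b) = (B (D x) a - \<omega> x a) + (B (D x) b - \<omega> x b)"
      by (simp add: B_add2 w_add2)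
  next
    fix c a show "B (D x) (c *s a) - \<omega> x (c *s a) = c * (B (D x) a - \<omega> x a)"
      by (simp add: B_sc2 w_sc2 right_diff_distrib)
  next
    fix b assume "b \<in> Basis" then show "B (D x) b - \<omega> x b = 0" using h0 by blast
  qed
  then show ?thesis by simp
qed

lemma D_add: "D (x + y) = D x + D y"
  by (rule B_eq) (simp add: DB B_add1 w_add1)
lemma D_sc: "D (c *s x) = c *s D x"
  by (rule B_eq) (simp add: DB B_sc1 w_sc1)
lemma D_zero: "D 0 = 0"
  by (rule B_eq) (simp add: DB B_zero1 w_zero1)
lemma D_diff: "D (x - y) = D x - D y"
  by (rule B_eq) (simp add: DB B_diff1 module_hom.diff[OF mh_w1])
lemma D_inj: "D x = 0 \<Longrightarrow> x = 0"
  by (rule w_nd) (simp add: DB[symmetric] B_zero1)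
lemma D_skew: "B (D x) y = - B x (D y)"
proof -
  have "B (D x) y = \<omega> x y" by (rule DB)
  also have "\<dots> = - \<omega> y x" by (rule w_skew)
  also have "\<dots> = - B x (D y)" by (simp add: DB B_sym[of x "D y"])
  finally show ?thesis .
qed
lemma D_der: "D (m x y) = m (D x) y + m x (D y)"
proof (rule B_eq)
  fix z
  have "\<omega> (m y z) x = - \<omega> x (m y z)" by (rule w_skew)
  also have "\<dots> = - B (D x) (m y z)" by (simp add: DB)
  also have "\<dots> = - B (m (D x) y) z" by (simp add: B_inv)
  finally have 1: "\<omega> (m y z) x = - B (m (D x) y) z" .
  have "\<omega> (m z x) y = - \<omega> y (m z x)" by (rule w_skew)
  also have "\<dots> = - B (D y) (m x z)" by (simp add: DB m_comm[of z x])
  also have "\<dots> = - B (m (D y) x) z" by (simp add: B_inv)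
  also have "\<dots> = - B (m x (D y)) z" by (simp add: m_comm[of x "D y"])
  finally have 2: "\<omega> (m z x) y = - B (m x (D y)) z" .
  have 3: "\<omega> (m x y) z = B (D (m x y)) z" by (simp add: DB)
  have "B (D (m x y)) z - B (m (D x) y) z - B (m x (D y)) z = 0"
    using w_cyc[of x y z] unfolding 1 2 3 by simp
  then show "B (D (m x y)) z = B (m (D x) y + m x (D y)) z"
    by (simp add: B_add1 algebra_simps)
qed

end



context sjm begin

definition T :: "'k \<Rightarrow> 'v \<Rightarrow> 'v" where "T c x = D x - c *s x"

lemma T_add: "T c (x + y) = T c x + T c y"
  by (simp add: T_def D_add scale_right_distrib)
lemma T_zero: "T c 0 = 0"
  by (simp add: T_def D_zero)
lemma T_sc: "T c (a *s x) = a *s T c x"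
  by (simp add: T_def D_sc scale_right_diff_distrib mult.commute)
lemma T_diff: "T c (x - y) = T c x - T c y"
  by (simp add: T_def D_diff scale_right_diff_distrib)
lemma T_D: "T c (D x) = D (T c x)"
  by (simp add: T_def D_diff D_sc)

lemma Tn_zero: "(T c ^^ n) 0 = 0"
  by (induction n) (simp_all add: T_zero)
lemma Tn_add: "(T c ^^ n) (x + y) = (T c ^^ n) x + (T c ^^ n) y"
  by (induction n) (simp_all add: T_add)
lemma Tn_sc: "(T c ^^ n) (a *s x) = a *s (T c ^^ n) x"
  by (induction n) (simp_all add: T_sc)
lemma Tn_D: "(T c ^^ n) (D x) = D ((T c ^^ n) x)"
  by (induction n) (simp_all add: T_D)

definition E :: "'k \<Rightarrow> 'v set" where "E c = {x. \<exists>n. (T c ^^ n) x = 0}"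

lemma E_D: "x \<in> E c \<Longrightarrow> D x \<in> E c"
proof -
  assume "x \<in> E c"
  then obtain n where "(T c ^^ n) x = 0" unfolding E_def by blast
  then have "(T c ^^ n) (D x) = 0" by (simp add: Tn_D D_zero)
  then show ?thesis unfolding E_def by blast
qed

lemma T_B: "B (T a x) y + B x (T b y) = - (a + b) * B x y"
  by (simp add: T_def B_diff1 B_diff2 B_sc1 B_sc2 D_skew algebra_simps)

lemma orth_aux:
  assumes "(T a ^^ n) x = 0" "(T b ^^ k) y = 0" "a + b \<noteq> 0"
  shows "B x y = 0"
  using assms(1,2)
proof (induction n arbitrary: x k y)
  case 0 then show ?case by (simp add: B_zero1)
next
  case (Suc n)
  have x': "(T a ^^ n) (T a x) = 0" using Suc.prems(1) by (simp add: funpow_Suc_right del: funpow.simps)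
  note IH = Suc.IH
  show ?case using Suc.prems(2)
  proof (induction k arbitrary: y)
    case 0 then show ?case by (simp add: B_zero2)
  next
    case (Suc k)
    have y': "(T b ^^ k) (T b y) = 0" using Suc.prems(1) by (simp add: funpow_Suc_right del: funpow.simps)
    have 1: "B (T a x) y = 0" by (rule IH[OF x' Suc.prems])
    have 2: "B x (T b y) = 0" by (rule Suc.IH[OF y'])
    have "- (a + b) * B x y = 0" using T_B[of a x y b] unfolding 1 2 add_0 by (rule sym)
    then show ?case using assms(3) mult_eq_0_iff neg_equal_0_iff_equal by blast
  qed
qed

lemma orth: "x \<in> E a \<Longrightarrow> y \<in> E b \<Longrightarrow> a + b \<noteq> 0 \<Longrightarrow> B x y = 0"
  unfolding E_def using orth_aux by blast

lemma T_m: "T (a + b) (m x y) = m (T a x) y + m x (T b y)"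
  by (simp add: T_def D_der m_diff1 m_diff2 m_sc1 m_sc2 scale_left_distrib algebra_simps)

lemma mult_aux:
  assumes "(T a ^^ n) x = 0" "(T b ^^ k) y = 0"
  shows "(T (a + b) ^^ (n + k)) (m x y) = 0"
  using assms
proof (induction n arbitrary: x k y)
  case 0 then show ?case by (simp add: m_zero1 Tn_zero del: funpow.simps)
next
  case (Suc n)
  have x': "(T a ^^ n) (T a x) = 0" using Suc.prems(1) by (simp add: funpow_Suc_right del: funpow.simps)
  note IH = Suc.IH
  show ?case using Suc.prems(2)
  proof (induction k arbitrary: y)
    case 0 then show ?case by (simp add: m_zero2 Tn_zero T_zero del: funpow.simps)
  next
    case (Suc k)
    have y': "(T b ^^ k) (T b y) = 0" using Suc.prems(1) by (simp add: funpow_Suc_right del: funpow.simps)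
    have 1: "(T (a + b) ^^ (n + Suc k)) (m (T a x) y) = 0" by (rule IH[OF x' Suc.prems])
    have 2: "(T (a + b) ^^ (Suc n + k)) (m x (T b y)) = 0" by (rule Suc.IH[OF y'])
    have "(T (a + b) ^^ (Suc n + Suc k)) (m x y) = (T (a + b) ^^ (n + Suc k)) (T (a + b) (m x y))"
      by (simp add: funpow_Suc_right del: funpow.simps)
    also have "\<dots> = (T (a + b) ^^ (n + Suc k)) (m (T a x) y) + (T (a + b) ^^ (Suc n + k)) (m x (T b y))"
      by (simp add: T_m Tn_add del: funpow.simps)
    finally show ?case using 1 2 by simp
  qed
qed

lemma E_mult: "x \<in> E a \<Longrightarrow> y \<in> E b \<Longrightarrow> m x y \<in> E (a + b)"
  unfolding E_def using mult_aux by blast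

lemma E_zero: "x \<in> E 0 \<Longrightarrow> x = 0"
proof -
  assume "x \<in> E 0"
  then obtain n where "(T 0 ^^ n) x = 0" unfolding E_def by blast
  then show "x = 0"
  proof (induction n arbitrary: x)
    case 0 then show ?case by simp
  next
    case (Suc n)
    then have "(T 0 ^^ n) (T 0 x) = 0" by (simp add: funpow_Suc_right del: funpow.simps)
    then have "T 0 x = 0" by (rule Suc.IH)
    then show ?case by (simp add: T_def D_inj)
  qed
qed

end



context sjm begin

declare D_zero[simp]

definition opoly :: "'k poly \<Rightarrow> 'v \<Rightarrow> 'v" where
  "opoly p = fold_coeffs (\<lambda>a f x. a *s x + D (f x)) p (\<lambda>x. 0)"

lemma opoly_0 [simp]: "opoly 0 x = 0"
  by (simp add: opoly_def)

lemma opoly_pCons [simp]: "opoly (pCons a p) x = a *s x + D (opoly p x)"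
proof (cases "p = 0 \<and> a = 0")
  case True then show ?thesis by (simp add: D_zero)
next
  case False
  then have "fold_coeffs (\<lambda>a f x. a *s x + D (f x)) (pCons a p) =
     (\<lambda>a f x. a *s x + D (f x)) a \<circ> fold_coeffs (\<lambda>a f x. a *s x + D (f x)) p"
    by auto
  then show ?thesis unfolding opoly_def by (simp add: fun_eq_iff)
qed

lemma opoly_x0 [simp]: "opoly p 0 = 0"
  by (induction p) (simp_all add: D_zero)
lemma opoly_xadd: "opoly p (x + y) = opoly p x + opoly p y"
  by (induction p) (simp_all add: D_add scale_right_distrib algebra_simps)
lemma opoly_xsc: "opoly p (c *s x) = c *s opoly p x"
  by (induction p) (simp_all add: D_sc scale_right_distrib mult.commute)
lemma opoly_D: "opoly p (D x) = D (opoly p x)"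
  by (induction p) (simp_all add: D_add D_sc)
lemma opoly_add: "opoly (p + q) x = opoly p x + opoly q x"
proof (induction p arbitrary: q)
  case 0 then show ?case by simp
next
  case (pCons a p)
  obtain b q' where q: "q = pCons b q'" by (cases q) auto
  have ih: "opoly (p + q') x = opoly p x + opoly q' x" by (rule pCons.IH)
  show ?case by (simp add: q ih D_add scale_left_distrib)
qed
lemma opoly_smult: "opoly (smult c p) x = c *s opoly p x"
  by (induction p) (simp_all add: D_add D_sc scale_right_distrib)
lemma opoly_minus: "opoly (- p) x = - opoly p x"
  using opoly_smult[of "-1" p x] by simp
lemma opoly_diff: "opoly (p - q) x = opoly p x - opoly q x"
  using opoly_add[of p "- q" x] by (simp add: opoly_minus)
lemma opoly_mult: "opoly (p * q) x = opoly p (opoly q x)"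
  by (induction p) (simp_all add: opoly_add opoly_smult opoly_D)
lemma opoly_1 [simp]: "opoly 1 x = x"
  by (simp add: one_pCons D_zero)
lemma opoly_lin: "opoly [:-c, 1:] x = T c x"
  by (simp add: T_def D_zero)
lemma opoly_linpow: "opoly ([:-c, 1:] ^ n) x = (T c ^^ n) x"
proof (induction n arbitrary: x)
  case 0 then show ?case by simp
next
  case (Suc n)
  have "opoly ([:-c, 1:] ^ Suc n) x = opoly [:-c, 1:] (opoly ([:-c, 1:] ^ n) x)"
    by (simp only: power_Suc opoly_mult)
  then show ?case by (simp only: opoly_lin Suc.IH funpow.simps o_apply)
qed
lemma opoly_monom: "opoly (monom a n) x = a *s (D ^^ n) x"
proof (induction n)
  case 0 then show ?case by (simp add: monom_0 D_zero)
next
  case (Suc n) then show ?case by (simp add: monom_Suc D_sc funpow_swap1)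
qed
lemma opoly_sum: "opoly (\<Sum>i\<in>I. p i) x = (\<Sum>i\<in>I. opoly (p i) x)"
  by (induction I rule: infinite_finite_induct) (simp_all add: opoly_add)

end



context sjm begin

lemma ann_vec: "\<exists>p. p \<noteq> 0 \<and> opoly p x = 0"
proof -
  define n where "n = card Basis"
  define f where "f i = (D ^^ i) x" for i
  show ?thesis
  proof (cases "inj_on f {..n}")
    case False
    then obtain i j where ij: "i \<le> n" "j \<le> n" "i \<noteq> j" "f i = f j" unfolding inj_on_def by auto
    define p where "p = monom (1::'k) i - monom 1 j"
    have "coeff p i = 1" using ij by (simp add: p_def)
    then have "p \<noteq> 0" by auto
    moreover have "opoly p x = 0" using ij by (simp add: p_def opoly_diff opoly_monom f_def)
    ultimately show ?thesis by blast
  next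
    case True
    define A where "A = f ` {..n}"
    have cA: "card A = Suc n" using True by (simp add: A_def card_image)
    have fA: "finite A" by (simp add: A_def)
    have "dependent A"
    proof (rule ccontr)
      assume "independent A"
      then have "card A \<le> card Basis"
        using independent_span_bound[OF finite_Basis, of A] by (simp add: span_Basis)
      then show False using cA n_def by simp
    qed
    then obtain u where u: "\<exists>v\<in>A. u v \<noteq> 0" "(\<Sum>v\<in>A. u v *s v) = 0"
      using dependent_finite[OF fA] by blast
    define p where "p = (\<Sum>i\<le>n. monom (u (f i)) i)"
    have cp: "coeff p i = u (f i)" if "i \<le> n" for i
      using that by (simp add: p_def coeff_sum)
    from u(1) obtain i where i: "i \<le> n" "u (f i) \<noteq> 0" by (auto simp: A_def)
    then have "p \<noteq> 0" using cp[OF i(1)] by auto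
    moreover have "opoly p x = (\<Sum>i\<le>n. u (f i) *s f i)"
      by (simp add: p_def opoly_sum opoly_monom f_def)
    moreover have "(\<Sum>i\<le>n. u (f i) *s f i) = (\<Sum>v\<in>A. u v *s v)"
      unfolding A_def by (simp add: sum.reindex[OF True])
    ultimately show ?thesis using u(2) by auto
  qed
qed

lemma ann: "\<exists>Q. Q \<noteq> 0 \<and> (\<forall>x. opoly Q x = 0)"
proof -
  have "\<forall>b. \<exists>p. p \<noteq> 0 \<and> opoly p b = 0" using ann_vec by blast
  from choice[OF this] obtain pb where pb: "\<And>b. pb b \<noteq> 0 \<and> opoly (pb b) b = 0" by blast
  define Q where "Q = (\<Prod>b\<in>Basis. pb b)"
  have Q0: "Q \<noteq> 0" using pb finite_Basis by (simp add: Q_def)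
  have Qb: "opoly Q b = 0" if "b \<in> Basis" for b
  proof -
    have "Q = (\<Prod>c\<in>Basis - {b}. pb c) * pb b"
      using that finite_Basis unfolding Q_def by (metis mult.commute prod.remove)
    then show ?thesis using pb by (simp add: opoly_mult)
  qed
  have "opoly Q x = 0" for x
  proof -
    have "x \<in> span Basis" by (simp add: span_Basis)
    then show ?thesis
      by (induction rule: span_induct_alt) (simp_all add: opoly_xadd opoly_xsc Qb)
  qed
  then show ?thesis using Q0 by blast
qed

lemma ann_split:
  assumes alg: "alg_closed TYPE('k)"
  shows "\<exists>S K. finite S \<and> (\<forall>x. opoly (\<Prod>l\<in>S. [:-l,1:]^K) x = 0)"
proof -
  obtain Q where Q: "Q \<noteq> 0" "\<And>x. opoly Q x = 0" using ann by blast
  obtain S K where SK: "finite S" "Q dvd (\<Prod>l\<in>S. [:-l,1:]^K)" using split_poly[OF alg Q(1)] by blast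
  then obtain r where r: "(\<Prod>l\<in>S. [:-l,1:]^K) = Q * r" by (elim dvdE)
  have "opoly (\<Prod>l\<in>S. [:-l,1:]^K) x = 0" for x
    unfolding r mult.commute[of Q r] opoly_mult Q(2) by simp
  then show ?thesis using SK(1) by blast
qed

lemma decomp:
  assumes "finite S" "opoly (\<Prod>l\<in>S. [:-l,1:]^K) x = 0"
  shows "x \<in> span (\<Union>l\<in>S. E l)"
  using assms
proof (induction S arbitrary: x rule: finite_induct)
  case empty
  then show ?case by (simp add: span_zero)
next
  case (insert u S)
  define h where "h = (\<Prod>l\<in>S. [:-l,1:]^K)"
  have prod: "(\<Prod>l\<in>insert u S. [:-l,1:]^K) = [:-u,1:]^K * h"
    using insert.hyps by (simp add: h_def)
  have "poly h u \<noteq> 0"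
    using insert.hyps by (auto simp: h_def poly_prod)
  then obtain a b where ab: "a * [:-u,1:]^K + b * h = 1" using bez by blast
  have xe: "x = opoly (a * [:-u,1:]^K) x + opoly (b * h) x"
    by (metis ab opoly_1 opoly_add)
  have "(T u ^^ K) (opoly (b * h) x) = opoly ([:-u,1:]^K) (opoly (b * h) x)"
    by (simp only: opoly_linpow)
  also have "\<dots> = opoly (b * ([:-u,1:]^K * h)) x"
    by (simp only: opoly_mult[symmetric] mult.left_commute)
  also have "\<dots> = 0" using insert.prems unfolding prod by (simp only: opoly_mult opoly_x0)
  finally have y: "opoly (b * h) x \<in> E u" unfolding E_def by blast
  have "opoly h (opoly (a * [:-u,1:]^K) x) = opoly (a * ([:-u,1:]^K * h)) x"
    by (simp only: opoly_mult[symmetric] mult.commute mult.left_commute)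
  also have "\<dots> = 0" using insert.prems unfolding prod by (simp only: opoly_mult opoly_x0)
  finally have "opoly (a * [:-u,1:]^K) x \<in> span (\<Union>l\<in>S. E l)"
    unfolding h_def by (rule insert.IH)
  then have z: "opoly (a * [:-u,1:]^K) x \<in> span (\<Union>l\<in>insert u S. E l)"
    by (rule rev_subsetD[OF _ span_mono]) auto
  have "opoly (b * h) x \<in> span (\<Union>l\<in>insert u S. E l)"
    using y by (intro span_base) auto
  then show ?case using z xe by (metis span_add)
qed

lemma E_triv:
  assumes "\<And>x. opoly Q x = 0" "poly Q u \<noteq> 0" "x \<in> E u"
  shows "x = 0"
proof -
  obtain n where n: "(T u ^^ n) x = 0" using assms(3) unfolding E_def by blast
  obtain a b where ab: "a * [:-u,1:]^n + b * Q = 1" using bez[OF assms(2)] by blast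
  have "x = opoly (a * [:-u,1:]^n) x + opoly (b * Q) x"
    by (metis ab opoly_1 opoly_add)
  also have "\<dots> = 0" by (simp only: opoly_mult opoly_linpow n assms(1) opoly_x0 add_0)
  finally show ?thesis .
qed

end



context sjm begin

lemma span_m:
  assumes C: "subspace C" and gen: "\<And>a b. a \<in> X \<Longrightarrow> b \<in> Y \<Longrightarrow> m a b \<in> C"
    and x: "x \<in> span X" and y: "y \<in> span Y"
  shows "m x y \<in> C"
proof -
  have inner: "m a y \<in> C" if a: "a \<in> X" for a
    using y
  proof (induction rule: span_induct_alt)
    case base then show ?case by (simp add: m_zero2 subspace_0[OF C])
  next
    case (step c z w)
    then show ?case
      by (simp add: m_add2 m_sc2 subspace_add[OF C] subspace_scale[OF C] gen a)
  qed
  show ?thesis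
    using x
  proof (induction rule: span_induct_alt)
    case base then show ?case by (simp add: m_zero1 subspace_0[OF C])
  next
    case (step c z w)
    then show ?case
      by (simp add: m_add1 m_sc1 subspace_add[OF C] subspace_scale[OF C] inner)
  qed
qed

lemma span_form:
  assumes bf: "bilinear_form scale f" and gen: "\<And>a b. a \<in> X \<Longrightarrow> b \<in> Y \<Longrightarrow> f a b = 0"
    and x: "x \<in> span X" and y: "y \<in> span Y"
  shows "f x y = 0"
proof -
  have h1: "module_hom scale (*) (\<lambda>x. f x z)" for z
    using bf unfolding bilinear_form_def by (blast intro: lin_mh)
  have h2: "module_hom scale (*) (f z)" for z
    using bf unfolding bilinear_form_def by (blast intro: lin_mh)
  note a1 = module_hom.add[OF h1] and a2 = module_hom.add[OF h2]
    and s1 = module_hom.scale[OF h1] and s2 = module_hom.scale[OF h2]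
    and z1 = module_hom.zero[OF h1] and z2 = module_hom.zero[OF h2]
  have inner: "f a y = 0" if a: "a \<in> X" for a
    using y
  proof (induction rule: span_induct_alt)
    case base then show ?case by (simp add: z2)
  next
    case (step c z w)
    then show ?case by (simp add: a2 s2 gen a)
  qed
  show ?thesis
    using x
  proof (induction rule: span_induct_alt)
    case base then show ?case by (simp add: z1)
  next
    case (step c z w)
    then show ?case by (simp add: a1 s1 inner)
  qed
qed

theorem main:
  assumes alg: "alg_closed TYPE('k)"
  shows "\<exists>U V. symplectic_jordan_manin scale m B \<omega> U V"
proof -
  obtain S K where SK: "finite S" "\<And>x. opoly (\<Prod>l\<in>S. [:-l,1:]^K) x = 0"
    using ann_split[OF alg] by blast
  have Etriv: "x = 0" if "v \<notin> S" "x \<in> E v" for v x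
  proof (rule E_triv[OF SK(2) _ that(2)])
    show "poly (\<Prod>l\<in>S. [:-l,1:]^K) v \<noteq> 0"
      using that(1) SK(1) by (auto simp: poly_prod)
  qed
  have "finite (S - {0})" "0 \<notin> S - {0}" using SK(1) by auto
  from cone_exists[OF this] obtain P where P: "cone P" "\<And>s. s \<in> S - {0} \<Longrightarrow> s \<in> P \<or> - s \<in> P"
    by blast
  have Padd: "a + b \<in> P" if "a \<in> P" "b \<in> P" for a b using P(1) that unfolding cone_def by blast
  have P0: "0 \<notin> P" using P(1) unfolding cone_def by blast
  define SP where "SP = {l\<in>S. l \<in> P}"
  define SN where "SN = {l\<in>S. - l \<in> P}"
  define U where "U = span (\<Union>l\<in>SP. E l)"
  define V where "V = span (\<Union>l\<in>SN. E l)"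
  have gU: "m a b \<in> U \<and> B a b = 0 \<and> \<omega> a b = 0" if ha: "a \<in> (\<Union>l\<in>SP. E l)" and hb: "b \<in> (\<Union>l\<in>SP. E l)" for a b
  proof -
    obtain l l' where l: "l \<in> SP" "a \<in> E l" "l' \<in> SP" "b \<in> E l'" using ha hb by blast
    have lP: "l + l' \<in> P" using l Padd unfolding SP_def by blast
    then have ne: "l + l' \<noteq> 0" using P0 by auto
    have mE: "m a b \<in> E (l + l')" using E_mult l by blast
    have "m a b \<in> U"
    proof (cases "l + l' \<in> S")
      case True
      then have "l + l' \<in> SP" using lP unfolding SP_def by blast
      then show ?thesis unfolding U_def using mE by (intro span_base) blast
    next
      case False
      then have "m a b = 0" using Etriv mE by blast
      then show ?thesis unfolding U_def by (simp add: span_zero)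
    qed
    moreover have "B a b = 0" using orth l ne by blast
    moreover have "\<omega> a b = 0" using orth[OF E_D[OF l(2)] l(4) ne] by (simp add: DB)
    ultimately show ?thesis by blast
  qed
  have gV: "m a b \<in> V \<and> B a b = 0 \<and> \<omega> a b = 0" if ha: "a \<in> (\<Union>l\<in>SN. E l)" and hb: "b \<in> (\<Union>l\<in>SN. E l)" for a b
  proof -
    obtain l l' where l: "l \<in> SN" "a \<in> E l" "l' \<in> SN" "b \<in> E l'" using ha hb by blast
    have "- l + - l' \<in> P" using l Padd unfolding SN_def by blast
    then have lP: "- (l + l') \<in> P" by (simp add: add.commute)
    have ne: "l + l' \<noteq> 0"
    proof
      assume "l + l' = 0"
      then have "- (l + l') = 0" by simp
      then show False using lP P0 by simp
    qed
    have mE: "m a b \<in> E (l + l')" using E_mult l by blast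
    have "m a b \<in> V"
    proof (cases "l + l' \<in> S")
      case True
      then have "l + l' \<in> SN" using lP unfolding SN_def by blast
      then show ?thesis unfolding V_def using mE by (intro span_base) blast
    next
      case False
      then have "m a b = 0" using Etriv mE by blast
      then show ?thesis unfolding V_def by (simp add: span_zero)
    qed
    moreover have "B a b = 0" using orth l ne by blast
    moreover have "\<omega> a b = 0" using orth[OF E_D[OF l(2)] l(4) ne] by (simp add: DB)
    ultimately show ?thesis by blast
  qed
  have subU: "subalgebra scale m U"
    unfolding subalgebra_def
  proof (intro conjI ballI)
    show sU: "subspace U" unfolding U_def by (rule subspace_span)
    fix x y assume xy: "x \<in> U" "y \<in> U"
    show "m x y \<in> U"
    proof (rule span_m[OF sU])
      fix a b assume "a \<in> (\<Union>l\<in>SP. E l)" "b \<in> (\<Union>l\<in>SP. E l)"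
      then show "m a b \<in> U" using gU by blast
    next
      show "x \<in> span (\<Union>l\<in>SP. E l)" using xy unfolding U_def by blast
    next
      show "y \<in> span (\<Union>l\<in>SP. E l)" using xy unfolding U_def by blast
    qed
  qed
  have subV: "subalgebra scale m V"
    unfolding subalgebra_def
  proof (intro conjI ballI)
    show sV: "subspace V" unfolding V_def by (rule subspace_span)
    fix x y assume xy: "x \<in> V" "y \<in> V"
    show "m x y \<in> V"
    proof (rule span_m[OF sV])
      fix a b assume "a \<in> (\<Union>l\<in>SN. E l)" "b \<in> (\<Union>l\<in>SN. E l)"
      then show "m a b \<in> V" using gV by blast
    next
      show "x \<in> span (\<Union>l\<in>SN. E l)" using xy unfolding V_def by blast
    next
      show "y \<in> span (\<Union>l\<in>SN. E l)" using xy unfolding V_def by blast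
    qed
  qed
  have isoBU: "B x y = 0" if "x \<in> U" "y \<in> U" for x y
    by (rule span_form[OF bf_B _ that[unfolded U_def]]) (use gU in blast)
  have isoBV: "B x y = 0" if "x \<in> V" "y \<in> V" for x y
    by (rule span_form[OF bf_B _ that[unfolded V_def]]) (use gV in blast)
  have isowU: "\<omega> x y = 0" if "x \<in> U" "y \<in> U" for x y
    by (rule span_form[OF bf_w _ that[unfolded U_def]]) (use gU in blast)
  have isowV: "\<omega> x y = 0" if "x \<in> V" "y \<in> V" for x y
    by (rule span_form[OF bf_w _ that[unfolded V_def]]) (use gV in blast)
  have all: "\<exists>u\<in>U. \<exists>v\<in>V. x = u + v" for x
  proof -
    have "x \<in> span (\<Union>l\<in>S. E l)" by (rule decomp[OF SK(1) SK(2)])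
    then show ?thesis
    proof (induction rule: span_induct_alt)
      case base
      have "0 \<in> U" "0 \<in> V" unfolding U_def V_def by (simp_all add: span_zero)
      then show ?case by force
    next
      case (step c a y)
      then obtain u v where uv: "u \<in> U" "v \<in> V" "y = u + v" by blast
      from step(1) obtain l where l: "l \<in> S" "a \<in> E l" by blast
      show ?case
      proof (cases "l = 0")
        case True
        then have "a = 0" using l E_zero by blast
        then show ?thesis using uv by auto
      next
        case False
        then have "l \<in> P \<or> - l \<in> P" using P(2) l by blast
        then show ?thesis
        proof
          assume "l \<in> P"
          then have "a \<in> U" unfolding U_def SP_def using l by (intro span_base) blast
          then have "c *s a + u \<in> U" using uv unfolding U_def by (intro span_add span_scale)
          moreover have "c *s a + y = (c *s a + u) + v" using uv by (simp add: add.assoc)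
          ultimately show ?thesis using uv by blast
        next
          assume "- l \<in> P"
          then have "a \<in> V" unfolding V_def SN_def using l by (intro span_base) blast
          then have "c *s a + v \<in> V" using uv unfolding V_def by (intro span_add span_scale)
          moreover have "c *s a + y = u + (c *s a + v)" using uv by (simp add: add_ac)
          ultimately show ?thesis using uv by blast
        qed
      qed
    qed
  qed
  have inter: "U \<inter> V = {0}"
  proof
    show "U \<inter> V \<subseteq> {0}"
    proof
      fix x assume x: "x \<in> U \<inter> V"
      have "B x z = 0" for z
      proof -
        obtain u v where uv: "u \<in> U" "v \<in> V" "z = u + v" using all by blast
        then show ?thesis using x isoBU isoBV by (simp add: B_add2)
      qed
      then have "x = 0" by (rule B_nd)
      then show "x \<in> {0}" by simp
    qed
    show "{0} \<subseteq> U \<inter> V" unfolding U_def V_def by (simp add: span_zero)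
  qed
  have "symplectic_jordan_manin scale m B \<omega> U V"
    unfolding symplectic_jordan_manin_def jordan_manin_def direct_sum_def totally_isotropic_def
  proof (intro conjI ballI allI)
    show "jordan_algebra scale m" by (rule JA)
    show "pseudo_euclidean scale m B" by (rule PE)
    show "symplectic_form scale m \<omega>" by (rule SF)
  qed (fact subU subV inter all isoBU isoBV isowU isowV)+
  then show ?thesis by blast
qed

end



theorem mainTheorem11:
  fixes scale :: "'k::field_char_0 \<Rightarrow> 'v::ab_group_add \<Rightarrow> 'v"
    and Basis :: "'v set"
    and m :: "'v \<Rightarrow> 'v \<Rightarrow> 'v"
    and B \<omega> :: "'v \<Rightarrow> 'v \<Rightarrow> 'k"
  assumes "alg_closed TYPE('k)"
    and "finite_dimensional_vector_space scale Basis"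
    and "jordan_algebra scale m"
    and "pseudo_euclidean scale m B"
    and "symplectic_form scale m \<omega>"
  shows "\<exists>U V. symplectic_jordan_manin scale m B \<omega> U V"
proof -
  interpret sjm scale Basis m B \<omega>
    using assms(2-5) by (simp add: sjm_def sjm_axioms_def)
  show ?thesis by (rule main[OF assms(1)])
qed

end
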